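(* For any two $n$-dimensional simplices $\triangle,\triangle'\subset\mathbb{R}^n$, $$\#\operatorname{vert}(\triangle\cap\triangle')\le\binom{2n+2}{n+2}.$$
   Context: $\operatorname{vert}(X)$ denotes the vertex set of a polytope $X$. *)

theory Defs
  imports "HOL-Analysis.Analysis"
begin

definition vert :: "'a::real_vector set \<Rightarrow> 'a set" where
  "vert X = {v. v extreme_point_of X}"

end

theory Submission
  imports Defs
begin

lemma count_vert:
  fixes H :: "((real ^ 'n) \<times> real) set"
  assumes H: "finite H"
  defines "P \<equiv> {x. \<forall>h\<in>H. fst h \<bullet> x \<le> snd h}"
  shows "finite (vert P) \<and> card (vert P) \<le> card H choose CARD('n)"
proof -
  define A where "A v = {h\<in>H. fst h \<bullet> v = snd h}" for v
  have spanA: "span (fst ` A v) = UNIV" if v: "v \<in> vert P" for v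
  proof (rule ccontr)
    assume "span (fst ` A v) \<noteq> UNIV"
    then obtain w where w: "w \<noteq> 0" "\<And>x. x \<in> span (fst ` A v) \<Longrightarrow> w \<bullet> x = 0"
      using span_not_UNIV_orthogonal by blast
    have vP: "v \<in> P" and ext: "v extreme_point_of P" using v by (auto simp: vert_def extreme_point_of_def)
    have ev: "\<forall>h\<in>H. \<forall>\<^sub>F e in at (0::real). fst h \<bullet> (v + e *\<^sub>R w) \<le> snd h \<and> fst h \<bullet> (v - e *\<^sub>R w) \<le> snd h"
    proof
      fix h assume h: "h \<in> H"
      show "\<forall>\<^sub>F e in at (0::real). fst h \<bullet> (v + e *\<^sub>R w) \<le> snd h \<and> fst h \<bullet> (v - e *\<^sub>R w) \<le> snd h"
      proof (cases "h \<in> A v")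
        case True
        then have "fst h \<bullet> w = 0" using w(2) span_base by (metis image_eqI inner_commute)
        then show ?thesis using True by (simp add: A_def inner_add_right inner_diff_right)
      next
        case False
        then have lt: "fst h \<bullet> v < snd h" using h vP by (force simp: A_def P_def)
        have c1: "((\<lambda>e. fst h \<bullet> (v + e *\<^sub>R w)) \<longlongrightarrow> fst h \<bullet> v) (at (0::real))"
          by (rule tendsto_eq_intros | simp)+
        have c2: "((\<lambda>e. fst h \<bullet> (v - e *\<^sub>R w)) \<longlongrightarrow> fst h \<bullet> v) (at (0::real))"
          by (rule tendsto_eq_intros | simp)+
        show ?thesis
          using order_tendstoD(2)[OF c1 lt] order_tendstoD(2)[OF c2 lt]
          by eventually_elim auto
      qed
    qed
    have "\<forall>\<^sub>F e in at (0::real). e \<noteq> 0 \<and> (\<forall>h\<in>H. fst h \<bullet> (v + e *\<^sub>R w) \<le> snd h \<and> fst h \<bullet> (v - e *\<^sub>R w) \<le> snd h)"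
      using eventually_ball_finite[OF H ev] eventually_at_filter[of "\<lambda>e. e \<noteq> 0"]
      by (auto simp: eventually_conj_iff eventually_at_filter)
    then obtain d :: real where d: "d > 0" "\<And>x. x \<noteq> 0 \<Longrightarrow> dist x 0 < d \<Longrightarrow> x \<noteq> 0 \<and> (\<forall>h\<in>H. fst h \<bullet> (v + x *\<^sub>R w) \<le> snd h \<and> fst h \<bullet> (v - x *\<^sub>R w) \<le> snd h)"
      unfolding eventually_at by blast
    define e where "e = d/2"
    have e: "e \<noteq> 0" "\<forall>h\<in>H. fst h \<bullet> (v + e *\<^sub>R w) \<le> snd h \<and> fst h \<bullet> (v - e *\<^sub>R w) \<le> snd h"
      using d(1) d(2)[of e] by (auto simp: e_def dist_real_def)
    have "v + e *\<^sub>R w \<in> P" "v - e *\<^sub>R w \<in> P" using e by (auto simp: P_def)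
    moreover have "v \<in> open_segment (v - e *\<^sub>R w) (v + e *\<^sub>R w)"
    proof -
      have "(v - e *\<^sub>R w) + (v + e *\<^sub>R w) = 2 *\<^sub>R v" by (simp add: scaleR_2)
      then have "midpoint (v - e *\<^sub>R w) (v + e *\<^sub>R w) = v" by (simp add: midpoint_def)
      moreover have "v - e *\<^sub>R w \<noteq> v + e *\<^sub>R w" proof
        assume "v - e *\<^sub>R w = v + e *\<^sub>R w"
        then have "(v + e *\<^sub>R w) - (v - e *\<^sub>R w) = 0" by simp
        moreover have "(v + e *\<^sub>R w) - (v - e *\<^sub>R w) = (e + e) *\<^sub>R w" by (simp add: vec_eq_iff algebra_simps)
        ultimately have "(e + e) *\<^sub>R w = 0" by simp
        then show False using e w by simp
      qed
      ultimately show ?thesis by (metis midpoint_in_open_segment)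
    qed
    ultimately show False using ext by (auto simp: extreme_point_of_def)
  qed
  have exJ: "\<exists>J. J \<subseteq> A v \<and> card J = CARD('n) \<and> span (fst ` J) = UNIV" if v: "v \<in> vert P" for v
  proof -
    obtain B where B: "B \<subseteq> fst ` A v" "independent B" "fst ` A v \<subseteq> span B" "card B = dim (fst ` A v)"
      using basis_exists by blast
    have "dim (fst ` A v) = dim (span (fst ` A v))" by (simp add: dim_span)
    also have "\<dots> = dim (UNIV :: (real^'n) set)" using spanA[OF v] by simp
    also have "\<dots> = CARD('n)" by simp
    finally have dimA: "dim (fst ` A v) = CARD('n)" .
    obtain J where J: "J \<subseteq> A v" "inj_on fst J" "B = fst ` J"
      using B(1) subset_image_inj by metis
    have "span (fst ` J) = UNIV"
    proof -
      have "span (fst ` A v) \<subseteq> span (span B)" using B(3) by (rule span_mono)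
      then show ?thesis using B(3) J(3) spanA[OF v] by (auto simp: span_span)
    qed
    moreover have "card J = CARD('n)"
      using J B(4) dimA card_image[OF J(2)] by simp
    ultimately show ?thesis using J(1) by blast
  qed
  define \<phi> where "\<phi> v = (SOME J. J \<subseteq> A v \<and> card J = CARD('n) \<and> span (fst ` J) = UNIV)" for v
  have phi: "\<phi> v \<subseteq> A v \<and> card (\<phi> v) = CARD('n) \<and> span (fst ` \<phi> v) = UNIV" if "v \<in> vert P" for v
    unfolding \<phi>_def by (rule someI_ex[OF exJ[OF that]])
  have inj: "inj_on \<phi> (vert P)"
  proof
    fix v v' assume v: "v \<in> vert P" and v': "v' \<in> vert P" and eq: "\<phi> v = \<phi> v'"
    have orth: "orthogonal (v - v') y" if y: "y \<in> fst ` \<phi> v" for y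
    proof -
      obtain h where h: "h \<in> \<phi> v" "y = fst h" using y by blast
      have "fst h \<bullet> v = snd h" using h phi[OF v] by (auto simp: A_def)
      moreover have "fst h \<bullet> v' = snd h" using h phi[OF v'] eq by (auto simp: A_def)
      moreover have "(v - v') \<bullet> fst h = fst h \<bullet> v - fst h \<bullet> v'" by (metis inner_diff_left inner_commute)
      ultimately show ?thesis using h by (simp add: orthogonal_def)
    qed
    have "orthogonal (v - v') (v - v')"
      using orthogonal_to_span[OF _ orth] phi[OF v] by blast
    then show "v = v'" by (simp add: orthogonal_def)
  qed
  have sub: "\<phi> ` vert P \<subseteq> {J. J \<subseteq> H \<and> card J = CARD('n)}"
    using phi by (auto simp: A_def)
  have fin: "finite {J. J \<subseteq> H \<and> card J = CARD('n)}" using H by simp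
  have "finite (vert P)"
    using finite_imageD[OF finite_subset[OF sub fin] inj] .
  moreover have "card (vert P) \<le> card H choose CARD('n)"
    using card_inj_on_le[OF inj sub fin] n_subsets[OF H] by simp
  ultimately show ?thesis by blast
qed

lemma simplex_halfspaces:
  fixes T :: "(real^'n) set"
  assumes "int CARD('n) simplex T"
  obtains H :: "((real^'n) \<times> real) set" where "finite H" "card H \<le> CARD('n) + 1"
    "T = {x. \<forall>h\<in>H. fst h \<bullet> x \<le> snd h}"
proof -
  obtain C where C: "finite C" "\<not> affine_dependent C" "int (card C) = int CARD('n) + 1" "T = convex hull C"
    using assms unfolding simplex by blast
  have cardC: "card C = CARD('n) + 1" using C(3) by linarith
  have poly: "polyhedron T" using assms by (rule simplex_imp_polyhedron)
  have bnd: "bounded T" using assms compact_simplex compact_imp_bounded by blast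
  have cl: "closed T" using assms closed_simplex by blast
  have cvx: "convex T" using assms convex_simplex by blast
  have aff: "affine hull T = UNIV"
    using aff_dim_simplex[OF assms] aff_dim_eq_full[of T] by simp
  have "C \<noteq> {}" using cardC by auto
  then have Tne: "T \<noteq> {}" using C(4) by simp
  define Fs where "Fs = {G. G facet_of T}"
  have Fs_sub: "Fs \<subseteq> (\<lambda>u. convex hull (C - {u})) ` C"
    using facet_of_convex_hull_affine_independent[OF C(2)] C(4) by (auto simp: Fs_def)
  have finFs: "finite Fs" using finite_subset[OF Fs_sub] C(1) by blast
  have cardFs: "card Fs \<le> CARD('n) + 1"
    using card_mono[OF finite_imageI[OF C(1)] Fs_sub] card_image_le[OF C(1), of "\<lambda>u. convex hull (C - {u})"] cardC by linarith
  have "\<forall>G\<in>Fs. \<exists>p. T \<subseteq> {x. fst p \<bullet> x \<le> snd p} \<and> G = T \<inter> {x. fst p \<bullet> x = snd p}"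
  proof
    fix G assume "G \<in> Fs"
    then obtain a b where "a \<noteq> 0" "T \<subseteq> {x. a \<bullet> x \<le> b}" "G = T \<inter> {x. a \<bullet> x = b}"
      using facet_of_polyhedron[OF poly] by (auto simp: Fs_def)
    then show "\<exists>p. T \<subseteq> {x. fst p \<bullet> x \<le> snd p} \<and> G = T \<inter> {x. fst p \<bullet> x = snd p}"
      by (intro exI[of _ "(a,b)"]) simp
  qed
  then obtain f where f: "\<And>G. G \<in> Fs \<Longrightarrow> T \<subseteq> {x. fst (f G) \<bullet> x \<le> snd (f G)} \<and> G = T \<inter> {x. fst (f G) \<bullet> x = snd (f G)}"
    by metis
  define H where "H = f ` Fs"
  have "finite H" using finFs by (simp add: H_def)
  moreover have "card H \<le> CARD('n) + 1" using card_image_le[OF finFs, of f] cardFs unfolding H_def by linarith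
  moreover have "T = {x. \<forall>h\<in>H. fst h \<bullet> x \<le> snd h}"
  proof
    show "T \<subseteq> {x. \<forall>h\<in>H. fst h \<bullet> x \<le> snd h}" using f by (auto simp: H_def)
  next
    show "{x. \<forall>h\<in>H. fst h \<bullet> x \<le> snd h} \<subseteq> T"
    proof (rule subsetI, rule ccontr)
      fix x assume xH: "x \<in> {x. \<forall>h\<in>H. fst h \<bullet> x \<le> snd h}" and xT: "x \<notin> T"
      have "rel_interior T \<noteq> {}" using rel_interior_eq_empty cvx Tne by blast
      then obtain p where p: "p \<in> rel_interior T" by blast
      have pT: "p \<in> T" using p rel_interior_subset by blast
      have l: "x - p \<noteq> 0" using pT xT by auto
      obtain d where d: "0 < d" "p + d *\<^sub>R (x - p) \<in> rel_frontier T"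
          "\<And>e. \<lbrakk>0 \<le> e; e < d\<rbrakk> \<Longrightarrow> p + e *\<^sub>R (x - p) \<in> rel_interior T"
        using ray_to_rel_frontier[OF bnd p _ l] aff by auto
      have "d < 1"
      proof (rule ccontr)
        assume "\<not> d < 1"
        then consider "1 < d" | "d = 1" by linarith
        then show False
        proof cases
          case 1
          then have "p + 1 *\<^sub>R (x - p) \<in> rel_interior T" using d(3)[of 1] by simp
          then show False using xT rel_interior_subset by auto
        next
          case 2
          then have "x \<in> rel_frontier T" using d(2) by simp
          then show False using xT cl by (simp add: rel_frontier_def closure_closed)
        qed
      qed
      define y where "y = p + d *\<^sub>R (x - p)"
      obtain G where G: "G \<in> Fs" "y \<in> G"
        using d(2) rel_frontier_of_polyhedron[OF poly] by (auto simp: y_def Fs_def)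
      define a where "a = fst (f G)"
      define b where "b = snd (f G)"
      have ya: "a \<bullet> y = b" using f[OF G(1)] G(2) by (auto simp: a_def b_def)
      have xa: "a \<bullet> x \<le> b" using xH G(1) by (auto simp: H_def a_def b_def)
      have "p \<notin> G" using p rel_interior_of_polyhedron[OF poly] G(1) by (auto simp: Fs_def)
      then have pa: "a \<bullet> p < b" using f[OF G(1)] pT by (force simp: a_def b_def)
      have "a \<bullet> y = a \<bullet> p + d * (a \<bullet> x - a \<bullet> p)"
        by (simp add: y_def inner_add_right inner_diff_right)
      moreover have "d * (a \<bullet> x - a \<bullet> p) \<le> d * (b - a \<bullet> p)"
        using xa d(1) by (intro mult_left_mono) auto
      moreover have "d * (b - a \<bullet> p) < b - a \<bullet> p" using \<open>d < 1\<close> pa by simp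
      ultimately show False using ya by linarith
    qed
  qed
  ultimately show ?thesis using that by blast
qed

theorem lemma5p3:
  fixes T T' :: "(real ^ 'n) set"
  assumes "int CARD('n) simplex T" and "int CARD('n) simplex T'"
  shows "finite (vert (T \<inter> T')) \<and>
         card (vert (T \<inter> T')) \<le> (2 * CARD('n) + 2) choose (CARD('n) + 2)"
proof -
  obtain H1 :: "((real^'n) \<times> real) set" where H1: "finite H1" "card H1 \<le> CARD('n) + 1"
    "T = {x. \<forall>h\<in>H1. fst h \<bullet> x \<le> snd h}" using simplex_halfspaces[OF assms(1)] by blast
  obtain H2 :: "((real^'n) \<times> real) set" where H2: "finite H2" "card H2 \<le> CARD('n) + 1"
    "T' = {x. \<forall>h\<in>H2. fst h \<bullet> x \<le> snd h}" using simplex_halfspaces[OF assms(2)] by blast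
  have eq: "T \<inter> T' = {x. \<forall>h\<in>H1 \<union> H2. fst h \<bullet> x \<le> snd h}" using H1(3) H2(3) by auto
  have fin: "finite (H1 \<union> H2)" using H1 H2 by simp
  have cH: "card (H1 \<union> H2) \<le> 2 * CARD('n) + 2"
    using card_Un_le[of H1 H2] H1(2) H2(2) by linarith
  have r: "finite (vert (T \<inter> T')) \<and> card (vert (T \<inter> T')) \<le> card (H1 \<union> H2) choose CARD('n)"
    using count_vert[OF fin] unfolding eq .
  have "card (H1 \<union> H2) choose CARD('n) \<le> (2 * CARD('n) + 2) choose CARD('n)"
    using cH by (rule binomial_right_mono)
  also have "\<dots> = (2 * CARD('n) + 2) choose (CARD('n) + 2)"
    using binomial_symmetric[of "CARD('n)" "2 * CARD('n) + 2"] by simp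
  finally show ?thesis using r by simp
qed

end
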